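(* Let $E$ be a Banach space with separable dual $E^{*}$ and let $\mu$ be a probability measure on $E$ with $\int_{E}\|x\|\,d\mu(x)<\infty$ and $\int_{E}x\,d\mu(x)=0$. Let $n\in\mathbb{N}$, let $X_{1},\ldots,X_{n}$ be i.i.d. random elements of $E$ with distribution $\mu$, and let $\epsilon_{1},\ldots,\epsilon_{n}$ be i.i.d. uniform $\pm1$ random variables independent of $X_{1},\ldots,X_{n}$. Then \[\mathbb{E}\,W_{1,1}\Big(\mu,\frac{1}{n}\sum_{i=1}^{n}\delta_{X_{i}}\Big)\geq\frac{1}{2n}\mathbb{E}\Big\|\sum_{i=1}^{n}\epsilon_{i}X_{i}\Big\|.\]
   Context: $B_{E^{*}}=\{v^{*}\in E^{*}:\|v^{*}\|\leq1\}$. For probability measures $\mu_{1},\mu_{2}$ on $E$, $W_{1,1}(\mu_{1},\mu_{2})=\sup_{v^{*}\in B_{E^{*}}}W_{1}(v^{*}_{\#}\mu_{1},v^{*}_{\#}\mu_{2})$, where $v^{*}_{\#}\mu_{i}$ is the pushforward under $v^{*}$ and $W_{1}$ is the 1-Wasserstein distance on $\mathbb{R}$. $\delta_{x}$ denotes a Dirac mass. *)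

theory Defs
  imports "HOL-Probability.Probability"
begin

text \<open>1-Wasserstein distance between probability measures on the real line,
  defined via couplings (value in ennreal; infimum over the empty set is top).\<close>
definition W1 :: "real measure \<Rightarrow> real measure \<Rightarrow> ennreal" where
  "W1 P Q = (INF \<pi> \<in> {\<pi> :: (real \<times> real) measure.
        prob_space \<pi> \<and> sets \<pi> = sets borel \<and>
        distr \<pi> borel fst = P \<and> distr \<pi> borel snd = Q}.
      (\<integral>\<^sup>+ z. ennreal \<bar>fst z - snd z\<bar> \<partial>\<pi>))"

definition W11 :: "'a::real_normed_vector measure \<Rightarrow> 'a measure \<Rightarrow> ennreal" where
  "W11 \<mu>1 \<mu>2 = (SUP v \<in> {v :: 'a \<Rightarrow>\<^sub>L real. norm v \<le> 1}.
      W1 (distr \<mu>1 borel (blinfun_apply v)) (distr \<mu>2 borel (blinfun_apply v)))"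

text \<open>Empirical measure (1/n) sum_{i<n} delta_{x i}, as a measure on the Borel sets.\<close>
definition empirical :: "nat \<Rightarrow> (nat \<Rightarrow> 'a::topological_space) \<Rightarrow> 'a measure" where
  "empirical n x = distr (uniform_count_measure {..<n}) borel x"

end

theory Submission
  imports Defs
begin


lemma HB_ext_step:
  fixes M :: "('a::real_normed_vector \<times> real) set"
  assumes sub: "subspace M" and bnd: "\<forall>(x,a)\<in>M. a \<le> norm x" and z: "z \<notin> fst ` M"
  shows "\<exists>M'. subspace M' \<and> M \<subset> M' \<and> (\<forall>(x,a)\<in>M'. a \<le> norm x)"
proof -
  have key: "a - norm (x - z) \<le> norm (y + z) - b" if "(x,a)\<in>M" "(y,b)\<in>M" for x a y b
  proof -
    have "(x+y, a+b) \<in> M" using sub that subspace_add[of M "(x,a)" "(y,b)"] by simp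
    then have "a + b \<le> norm (x + y)" using bnd by auto
    also have "\<dots> \<le> norm (x - z) + norm (y + z)"
      using norm_triangle_ineq[of "x - z" "y + z"] by simp
    finally show ?thesis by simp
  qed
  have M0: "(0,0) \<in> M" using subspace_0[OF sub] by (simp add: zero_prod_def)
  define L where "L = {a - norm (x - z) | x a. (x,a)\<in>M}"
  define c where "c = Sup L"
  have Lne: "L \<noteq> {}" using M0 unfolding L_def by blast
  have Lbdd: "bdd_above L" unfolding L_def bdd_above_def using key M0 by fastforce
  have c1: "a - norm (x - z) \<le> c" if "(x,a)\<in>M" for x a
    unfolding c_def using that Lbdd by (intro cSup_upper) (auto simp: L_def)
  have c2: "c \<le> norm (y + z) - b" if "(y,b)\<in>M" for y b
    unfolding c_def using that Lne key by (intro cSup_least) (auto simp: L_def)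
  define M' where "M' = {p + t *\<^sub>R (z, c) | p t. p \<in> M}"
  have "subspace M'"
    unfolding subspace_def
  proof (intro conjI ballI allI)
    show "0 \<in> M'" unfolding M'_def using subspace_0[OF sub]
      by (intro CollectI exI[of _ 0] exI[of _ 0]) (auto simp: zero_prod_def)
  next
    fix u w assume "u \<in> M'" "w \<in> M'"
    then obtain p t q s where "p \<in> M" "q \<in> M" "u = p + t *\<^sub>R (z, c)" "w = q + s *\<^sub>R (z, c)"
      unfolding M'_def by blast
    then show "u + w \<in> M'" unfolding M'_def
      using subspace_add[OF sub] by (intro CollectI exI[of _ "p+q"] exI[of _ "t+s"]) (auto simp: algebra_simps)
  next
    fix r u assume "u \<in> M'"
    then obtain p t where "p \<in> M" "u = p + t *\<^sub>R (z, c)"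
      unfolding M'_def by blast
    then show "r *\<^sub>R u \<in> M'" unfolding M'_def
      using subspace_scale[OF sub] by (intro CollectI exI[of _ "r *\<^sub>R p"] exI[of _ "r*t"]) (auto simp: algebra_simps)
  qed
  moreover have "M \<subseteq> M'" unfolding M'_def by force
  moreover have "(z,c) \<in> M'" unfolding M'_def
  proof -
    have "(z,c) = 0 + 1 *\<^sub>R (z,c) \<and> 0 \<in> M" using subspace_0[OF sub] by simp
    then show "(z, c) \<in> {p + t *\<^sub>R (z, c) |p t. p \<in> M}" by blast
  qed
  moreover have "(z,c) \<notin> M" using z by force
  moreover have "\<forall>(x,a)\<in>M'. a \<le> norm x"
  proof safe
    fix x a assume "(x,a)\<in>M'"
    then obtain y b t where yb: "(y,b)\<in>M" and xa: "x = y + t *\<^sub>R z" "a = b + t * c"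
      unfolding M'_def by auto
    show "a \<le> norm x"
    proof (cases "t = 0")
      case True then show ?thesis using yb bnd xa by auto
    next
      case False
      have ybt: "((1/t) *\<^sub>R y, b/t) \<in> M" using subspace_scale[OF sub yb, of "1/t"] by simp
      show ?thesis
      proof (cases "t > 0")
        case True
        have "t * c \<le> t * (norm ((1/t) *\<^sub>R y + z) - b/t)"
          using mult_left_mono[OF c2[OF ybt], of t] True by simp
        also have "\<dots> = norm (t *\<^sub>R ((1/t) *\<^sub>R y + z)) - b"
          using True by (simp add: right_diff_distrib)
        also have "t *\<^sub>R ((1/t) *\<^sub>R y + z) = y + t *\<^sub>R z"
          using True by (simp add: scaleR_add_right)
        finally show ?thesis using xa by simp
      next
        case False
        with \<open>t \<noteq> 0\<close> have tn: "t < 0" by simp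
        have ybt': "((-1/t) *\<^sub>R y, -b/t) \<in> M" using subspace_scale[OF sub yb, of "-1/t"] by simp
        have "-b/t - norm ((-1/t) *\<^sub>R y - z) \<le> c" using c1[OF ybt'] .
        then have "(-t) * (-b/t - norm ((-1/t) *\<^sub>R y - z)) \<le> (-t) * c" using tn
          by (intro mult_left_mono) auto
        moreover have "(-t) * norm ((-1/t) *\<^sub>R y - z) = norm (y + t *\<^sub>R z)"
        proof -
          have "(-t) * norm ((-1/t) *\<^sub>R y - z) = norm ((-t) *\<^sub>R ((-1/t) *\<^sub>R y - z))"
            using tn by simp
          also have "(-t) *\<^sub>R ((-1/t) *\<^sub>R y - z) = y + t *\<^sub>R z" using tn by (simp add: algebra_simps)
          finally show ?thesis .
        qed
        ultimately show ?thesis using xa tn by (simp add: algebra_simps)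
      qed
    qed
  qed
  ultimately show ?thesis by blast
qed


lemma HB_norming:
  fixes y :: "'a::real_normed_vector"
  shows "\<exists>v::'a \<Rightarrow>\<^sub>L real. norm v \<le> 1 \<and> blinfun_apply v y = norm y"
proof -
  define A where "A = {G :: ('a \<times> real) set. subspace G \<and> (y, norm y) \<in> G \<and> (\<forall>(x,a)\<in>G. a \<le> norm x)}"
  have "\<exists>U\<in>A. \<forall>X\<in>C. X \<subseteq> U" if C: "C \<in> chains A" for C
  proof (cases "C = {}")
    case True
    have "span {(y, norm y)} \<in> A"
      unfolding A_def
    proof (intro CollectI conjI)
      show "subspace (span {(y, norm y)})" by (rule subspace_span)
      show "(y, norm y) \<in> span {(y, norm y)}" by (rule span_base) simp
      show "\<forall>(x, a)\<in>span {(y, norm y)}. a \<le> norm x"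
        unfolding span_singleton by (auto intro: mult_right_mono)
    qed
    then show ?thesis using True by blast
  next
    case False
    have CA: "C \<subseteq> A" and ch: "\<And>X Y. X \<in> C \<Longrightarrow> Y \<in> C \<Longrightarrow> X \<subseteq> Y \<or> Y \<subseteq> X"
      using C unfolding chains_def chain_subset_def by blast+
    have "\<Union>C \<in> A"
      unfolding A_def
    proof (intro CollectI conjI)
      show "subspace (\<Union>C)"
        unfolding subspace_def
      proof (intro conjI ballI allI)
        obtain G where "G \<in> C" using False by blast
        then show "0 \<in> \<Union>C" using CA subspace_0 unfolding A_def by blast
      next
        fix u w assume "u \<in> \<Union>C" "w \<in> \<Union>C"
        then obtain G H where GH: "G \<in> C" "H \<in> C" "u \<in> G" "w \<in> H" by blast
        then have "u \<in> G \<union> H" "w \<in> G \<union> H" by auto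
        moreover have "G \<union> H \<in> C" using ch[OF GH(1,2)] GH(1,2) by (metis sup.absorb1 sup.absorb2)
        ultimately show "u + w \<in> \<Union>C" using CA subspace_add unfolding A_def by blast
      next
        fix r u assume "u \<in> \<Union>C"
        then obtain G where "G \<in> C" "u \<in> G" by blast
        then show "r *\<^sub>R u \<in> \<Union>C" using CA subspace_scale unfolding A_def by blast
      qed
      show "(y, norm y) \<in> \<Union>C" using False CA unfolding A_def by blast
      show "\<forall>(x, a)\<in>\<Union>C. a \<le> norm x" using CA unfolding A_def by blast
    qed
    then show ?thesis by blast
  qed
  then obtain M where MA: "M \<in> A" and Mmax: "\<forall>X\<in>A. M \<subseteq> X \<longrightarrow> X = M"
    using Zorn_Lemma2[of A] by blast
  have sub: "subspace M" and yM: "(y, norm y) \<in> M" and bnd: "\<forall>(x,a)\<in>M. a \<le> norm x"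
    using MA unfolding A_def by auto
  have dom: "\<exists>a. (x,a) \<in> M" for x
  proof (rule ccontr)
    assume "\<nexists>a. (x, a) \<in> M"
    then have "x \<notin> fst ` M" by force
    from HB_ext_step[OF sub bnd this] obtain M' where
      "subspace M'" "M \<subset> M'" "\<forall>(x,a)\<in>M'. a \<le> norm x" by blast
    moreover have "(y, norm y) \<in> M'" using yM \<open>M \<subset> M'\<close> by blast
    ultimately have "M' \<in> A" unfolding A_def by blast
    with Mmax \<open>M \<subset> M'\<close> show False by blast
  qed
  have uniq: "a = b" if "(x,a) \<in> M" "(x,b) \<in> M" for x a b
  proof -
    have "(x,a) - (x,b) \<in> M" "(x,b) - (x,a) \<in> M" using subspace_diff[OF sub] that by blast+
    then have "(0, a - b) \<in> M" "(0, b - a) \<in> M" by simp_all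
    then have "a - b \<le> norm (0::'a)" "b - a \<le> norm (0::'a)" using bnd by auto
    then show ?thesis by simp
  qed
  define f where "f x = (SOME a. (x,a) \<in> M)" for x
  have fM: "(x, f x) \<in> M" for x unfolding f_def using dom[of x] by (rule someI_ex)
  have fadd: "f (x + x') = f x + f x'" for x x'
  proof -
    have "(x + x', f x + f x') \<in> M" using subspace_add[OF sub fM[of x] fM[of x']] by simp
    then show ?thesis using uniq[OF fM] by blast
  qed
  have fscale: "f (r *\<^sub>R x) = r *\<^sub>R f x" for r x
  proof -
    have "(r *\<^sub>R x, r * f x) \<in> M" using subspace_scale[OF sub fM[of x], of r] by simp
    then show ?thesis using uniq[OF fM] by simp
  qed
  have fbnd: "norm (f x) \<le> norm x * 1" for x
  proof -
    have "f x \<le> norm x" using bnd fM by blast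
    moreover have "f (-x) \<le> norm (-x)" using bnd fM by blast
    moreover have "f (-x) = - f x" using fscale[of "-1" x] by simp
    ultimately show ?thesis by simp
  qed
  have bl: "bounded_linear f" by (rule bounded_linear_intro[OF fadd fscale fbnd])
  have fy: "f y = norm y" using uniq[OF fM yM] .
  show ?thesis
  proof (intro exI conjI)
    show "norm (Blinfun f) \<le> 1"
      by (rule norm_blinfun_bound) (use fbnd bounded_linear_Blinfun_apply[OF bl] in auto)
    show "blinfun_apply (Blinfun f) y = norm y" using bounded_linear_Blinfun_apply[OF bl] fy by simp
  qed
qed



lemma W1_lower:
  fixes \<mu> :: "'a::{banach,second_countable_topology} measure" and v :: "'a \<Rightarrow>\<^sub>L real"
    and x :: "nat \<Rightarrow> 'a"
  assumes mu_prob: "prob_space \<mu>" and mu_sets: "sets \<mu> = sets borel"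
    and mu_int: "integrable \<mu> (\<lambda>x. x)" and mu_mean: "(\<integral>x. x \<partial>\<mu>) = 0" and n: "n \<ge> 1"
  shows "ennreal (\<bar>blinfun_apply v (\<Sum>i<n. x i)\<bar> / n)
    \<le> W1 (distr \<mu> borel (blinfun_apply v)) (distr (empirical n x) borel (blinfun_apply v))"
  unfolding W1_def
proof (rule INF_greatest, safe)
  fix \<pi> :: "(real \<times> real) measure"
  assume pp: "prob_space \<pi>" and ps: "sets \<pi> = sets borel"
    and pf: "distr \<pi> borel fst = distr \<mu> borel (blinfun_apply v)"
    and pn: "distr \<pi> borel snd = distr (empirical n x) borel (blinfun_apply v)"
  have vmeas: "blinfun_apply v \<in> borel_measurable borel"
    by (intro borel_measurable_continuous_onI) (auto intro: continuous_intros)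
  have vmeas': "blinfun_apply v \<in> borel_measurable \<mu>"
    using vmeas measurable_cong_sets[OF mu_sets refl] by blast
  have fm: "fst \<in> borel_measurable \<pi>" "snd \<in> borel_measurable \<pi>"
  proof -
    have "(\<lambda>z. fst z) \<in> borel_measurable (borel :: (real \<times> real) measure)"
      "(\<lambda>z. snd z) \<in> borel_measurable (borel :: (real \<times> real) measure)"
      by (intro borel_measurable_continuous_onI continuous_on_fst continuous_on_snd continuous_on_id)+
    then show "fst \<in> borel_measurable \<pi>" "snd \<in> borel_measurable \<pi>"
      using measurable_cong_sets[OF ps refl] by auto
  qed
  define U where "U = uniform_count_measure {..<n}"
  have xm: "x \<in> measurable U borel"
    unfolding U_def using measurable_cong_sets[OF sets_uniform_count_measure_count_space refl] by simp
  have emp: "empirical n x = distr U borel x" unfolding empirical_def U_def by simp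
  have Uprob: "prob_space U" unfolding U_def using n by (intro prob_space_uniform_count_measure) (auto simp: lessThan_empty_iff)
  have intv: "integrable \<mu> (\<lambda>y. blinfun_apply v y)"
    by (rule integrable_bounded_linear[OF blinfun.bounded_linear_right mu_int])
  have intfst: "integrable \<pi> fst"
  proof -
    have "integrable (distr \<mu> borel (blinfun_apply v)) (\<lambda>t. t)"
      using integrable_distr_eq[OF vmeas' measurable_ident_sets[OF refl]] intv by simp
    then show ?thesis using integrable_distr_eq[OF fm(1) measurable_ident_sets[OF refl]] pf by simp
  qed
  have intU: "integrable U (\<lambda>i. blinfun_apply v (x i))"
  proof -
    interpret U: prob_space U by (rule Uprob)
    show ?thesis
  proof (rule U.integrable_const_bound)
    show "AE i in U. norm (blinfun_apply v (x i)) \<le> (\<Sum>j<n. \<bar>blinfun_apply v (x j)\<bar>)"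
    proof (intro AE_I2)
      fix i assume "i \<in> space U"
      then have "i \<in> {..<n}" unfolding U_def by (simp add: space_uniform_count_measure)
      then show "norm (blinfun_apply v (x i)) \<le> (\<Sum>j<n. \<bar>blinfun_apply v (x j)\<bar>)"
        using member_le_sum[of i "{..<n}" "\<lambda>j. \<bar>blinfun_apply v (x j)\<bar>"] by simp
    qed
    show "(\<lambda>i. blinfun_apply v (x i)) \<in> borel_measurable U" using measurable_comp[OF xm vmeas] by (simp add: comp_def)
  qed
  qed
  have intsnd: "integrable \<pi> snd"
  proof -
    have "integrable (distr (empirical n x) borel (blinfun_apply v)) (\<lambda>t. t)"
      unfolding emp distr_distr[OF vmeas xm] using integrable_distr_eq[OF measurable_comp[OF xm vmeas] measurable_ident_sets[OF refl]] intU by (simp add: comp_def)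
    then show ?thesis using integrable_distr_eq[OF fm(2) measurable_ident_sets[OF refl]] pn by simp
  qed
  have i1: "(\<integral>z. fst z \<partial>\<pi>) = 0"
  proof -
    have "(\<integral>z. fst z \<partial>\<pi>) = (\<integral>t. t \<partial>distr \<pi> borel fst)" using integral_distr[OF fm(1) measurable_ident_sets[OF refl]] by simp
    also have "\<dots> = (\<integral>y. blinfun_apply v y \<partial>\<mu>)" unfolding pf using integral_distr[OF vmeas' measurable_ident_sets[OF refl]] by simp
    also have "\<dots> = blinfun_apply v (\<integral>y. y \<partial>\<mu>)"
      by (rule integral_bounded_linear[OF blinfun.bounded_linear_right mu_int])
    finally show ?thesis using mu_mean by simp
  qed
  have i2: "(\<integral>z. snd z \<partial>\<pi>) = blinfun_apply v (\<Sum>i<n. x i) / n"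
  proof -
    have "(\<integral>z. snd z \<partial>\<pi>) = (\<integral>t. t \<partial>distr \<pi> borel snd)" using integral_distr[OF fm(2) measurable_ident_sets[OF refl]] by simp
    also have "\<dots> = (\<integral>i. blinfun_apply v (x i) \<partial>U)" unfolding pn emp distr_distr[OF vmeas xm]
      using integral_distr[OF measurable_comp[OF xm vmeas] measurable_ident_sets[OF refl]] by (simp add: comp_def)
    also have "\<dots> = (\<Sum>i<n. blinfun_apply v (x i)) / n"
      unfolding U_def by (simp add: integral_uniform_count_measure)
    finally show ?thesis by (simp add: blinfun.sum_right)
  qed
  have "ennreal (\<bar>blinfun_apply v (\<Sum>i<n. x i)\<bar> / n) = ennreal \<bar>(\<integral>z. fst z - snd z \<partial>\<pi>)\<bar>"
    using i1 i2 intfst intsnd by (simp add: integral_diff)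
  also have "\<dots> \<le> ennreal (\<integral>z. \<bar>fst z - snd z\<bar> \<partial>\<pi>)"
    by (intro ennreal_leI integral_abs_bound)
  also have "\<dots> = (\<integral>\<^sup>+ z. ennreal \<bar>fst z - snd z\<bar> \<partial>\<pi>)"
    using intfst intsnd by (intro nn_integral_eq_integral[symmetric]) auto
  finally show "ennreal (\<bar>blinfun_apply v (\<Sum>i<n. x i)\<bar> / n) \<le> (\<integral>\<^sup>+ z. ennreal \<bar>fst z - snd z\<bar> \<partial>\<pi>)" .
qed



lemma meas_sumnorm:
  assumes "S \<subseteq> I" and "sets \<mu> = sets (borel :: 'a::{banach,second_countable_topology} measure)"
  shows "(\<lambda>x. ennreal (norm (\<Sum>i\<in>S. x i))) \<in> borel_measurable (PiM I (\<lambda>_. \<mu>))"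
proof -
  have "(\<lambda>x. ennreal (norm (\<Sum>i\<in>S. x i))) \<in> borel_measurable (PiM I (\<lambda>_. (borel :: 'a measure)))"
  proof -
    have "(\<lambda>x. \<Sum>i\<in>S. x i) \<in> borel_measurable (PiM I (\<lambda>_. (borel :: 'a measure)))"
      using assms(1) by (intro borel_measurable_sum) (auto intro!: measurable_component_singleton)
    then show ?thesis by measurable
  qed
  moreover have "sets (PiM I (\<lambda>_. \<mu>)) = sets (PiM I (\<lambda>_. (borel :: 'a measure)))"
    using assms(2) by (intro sets_PiM_cong) auto
  ultimately show ?thesis using measurable_cong_sets by blast
qed

locale sym_setup =
  fixes \<mu> :: "'a::{banach,second_countable_topology} measure"
  assumes mu_prob: "prob_space \<mu>"
    and mu_sets: "sets \<mu> = sets borel"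
    and mu_int: "integrable \<mu> (\<lambda>x. x)"
    and mu_mean: "(\<integral>x. x \<partial>\<mu>) = 0"
begin

lemma jensen: "ennreal (norm c) \<le> (\<integral>\<^sup>+ y. ennreal (norm (c + y)) \<partial>\<mu>)"
proof -
  interpret prob_space \<mu> by (rule mu_prob)
  have ic: "integrable \<mu> (\<lambda>y. c + y)" using mu_int by simp
  have "(\<integral>y. c + y \<partial>\<mu>) = c" using mu_int mu_mean by (simp add: integral_add prob_space)
  then have "norm c \<le> (\<integral>y. norm (c + y) \<partial>\<mu>)" using integral_norm_bound[of \<mu> "\<lambda>y. c + y"] by simp
  also have "ennreal \<dots> = (\<integral>\<^sup>+ y. ennreal (norm (c + y)) \<partial>\<mu>)"
    using ic by (intro nn_integral_eq_integral[symmetric]) auto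
  finally show ?thesis by (simp add: ennreal_leI)
qed

lemma step:
  assumes I: "finite I" and j: "j \<in> I" "j \<notin> S" and S: "S \<subseteq> I"
  shows "(\<integral>\<^sup>+ x. ennreal (norm (\<Sum>i\<in>S. x i)) \<partial>PiM I (\<lambda>_. \<mu>))
       \<le> (\<integral>\<^sup>+ x. ennreal (norm (\<Sum>i\<in>insert j S. x i)) \<partial>PiM I (\<lambda>_. \<mu>))"
proof -
  interpret product_sigma_finite "\<lambda>_. \<mu>"
    unfolding product_sigma_finite_def using prob_space_imp_sigma_finite[OF mu_prob] by simp
  interpret prob_space \<mu> by (rule mu_prob)
  define K where "K = I - {j}"
  have IK: "I = insert j K" "finite K" "j \<notin> K" using I j unfolding K_def by auto
  have SK: "S \<subseteq> K" using S j unfolding K_def by auto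
  have m1: "(\<lambda>x. ennreal (norm (\<Sum>i\<in>S. x i))) \<in> borel_measurable (PiM (insert j K) (\<lambda>_. \<mu>))"
    using meas_sumnorm[OF _ mu_sets] S IK by simp
  have m2: "(\<lambda>x. ennreal (norm (\<Sum>i\<in>insert j S. x i))) \<in> borel_measurable (PiM (insert j K) (\<lambda>_. \<mu>))"
    by (rule meas_sumnorm[OF _ mu_sets]) (use S IK(1) in auto)
  have "(\<integral>\<^sup>+ x. ennreal (norm (\<Sum>i\<in>S. x i)) \<partial>PiM I (\<lambda>_. \<mu>))
      = (\<integral>\<^sup>+ x. (\<integral>\<^sup>+ y. ennreal (norm (\<Sum>i\<in>S. (x(j:=y)) i)) \<partial>\<mu>) \<partial>PiM K (\<lambda>_. \<mu>))"
    unfolding IK(1) by (rule product_nn_integral_insert[OF IK(2,3) m1])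
  also have "\<dots> = (\<integral>\<^sup>+ x. ennreal (norm (\<Sum>i\<in>S. x i)) \<partial>PiM K (\<lambda>_. \<mu>))"
  proof (rule nn_integral_cong)
    fix x :: "_ \<Rightarrow> 'a"
    have "(\<Sum>i\<in>S. (x(j:=y)) i) = (\<Sum>i\<in>S. x i)" for y using j(2) by (intro sum.cong) auto
    then show "(\<integral>\<^sup>+ y. ennreal (norm (\<Sum>i\<in>S. (x(j:=y)) i)) \<partial>\<mu>) = ennreal (norm (\<Sum>i\<in>S. x i))"
      by (simp add: emeasure_space_1)
  qed
  also have "\<dots> \<le> (\<integral>\<^sup>+ x. (\<integral>\<^sup>+ y. ennreal (norm (\<Sum>i\<in>insert j S. (x(j:=y)) i)) \<partial>\<mu>) \<partial>PiM K (\<lambda>_. \<mu>))"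
  proof (rule nn_integral_mono)
    fix x :: "_ \<Rightarrow> 'a"
    have "(\<Sum>i\<in>insert j S. (x(j:=y)) i) = (\<Sum>i\<in>S. x i) + y" for y
    proof -
      have "finite S" using S I finite_subset by blast
      then have "(\<Sum>i\<in>insert j S. (x(j:=y)) i) = y + (\<Sum>i\<in>S. (x(j:=y)) i)" using j(2) by simp
      also have "(\<Sum>i\<in>S. (x(j:=y)) i) = (\<Sum>i\<in>S. x i)" using j(2) by (intro sum.cong) auto
      finally show ?thesis by (simp add: add.commute)
    qed
    then show "ennreal (norm (\<Sum>i\<in>S. x i)) \<le> (\<integral>\<^sup>+ y. ennreal (norm (\<Sum>i\<in>insert j S. (x(j:=y)) i)) \<partial>\<mu>)"
      using jensen[of "\<Sum>i\<in>S. x i"] by simp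
  qed
  also have "\<dots> = (\<integral>\<^sup>+ x. ennreal (norm (\<Sum>i\<in>insert j S. x i)) \<partial>PiM I (\<lambda>_. \<mu>))"
    unfolding IK(1) by (rule product_nn_integral_insert[OF IK(2,3) m2, symmetric])
  finally show ?thesis .
qed

lemma mono_sets:
  assumes I: "finite I" and T: "finite T" and ST: "S \<union> T \<subseteq> I" "S \<inter> T = {}"
  shows "(\<integral>\<^sup>+ x. ennreal (norm (\<Sum>i\<in>S. x i)) \<partial>PiM I (\<lambda>_. \<mu>))
       \<le> (\<integral>\<^sup>+ x. ennreal (norm (\<Sum>i\<in>S \<union> T. x i)) \<partial>PiM I (\<lambda>_. \<mu>))"
  using T ST
proof (induction T rule: finite_induct)
  case empty then show ?case by simp
next
  case (insert j T)
  have "(\<integral>\<^sup>+ x. ennreal (norm (\<Sum>i\<in>S. x i)) \<partial>PiM I (\<lambda>_. \<mu>))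
       \<le> (\<integral>\<^sup>+ x. ennreal (norm (\<Sum>i\<in>S \<union> T. x i)) \<partial>PiM I (\<lambda>_. \<mu>))"
    using insert by auto
  also have "\<dots> \<le> (\<integral>\<^sup>+ x. ennreal (norm (\<Sum>i\<in>insert j (S \<union> T). x i)) \<partial>PiM I (\<lambda>_. \<mu>))"
    using insert by (intro step I) auto
  finally show ?case by simp
qed

lemma signs:
  fixes I :: "nat set" and e :: "nat \<Rightarrow> real"
  assumes I: "finite I" and e: "\<forall>i\<in>I. e i \<in> {-1, 1}"
  shows "(\<integral>\<^sup>+ x. ennreal (norm (\<Sum>i\<in>I. e i *\<^sub>R x i)) \<partial>PiM I (\<lambda>_. \<mu>))
       \<le> 2 * (\<integral>\<^sup>+ x. ennreal (norm (\<Sum>i\<in>I. x i)) \<partial>PiM I (\<lambda>_. \<mu>))"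
proof -
  define A where "A = {i\<in>I. e i = 1}"
  define B where "B = I - A"
  have AB: "A \<union> B = I" "A \<inter> B = {}" "A \<subseteq> I" "B \<subseteq> I" "finite A" "finite B"
    using I unfolding A_def B_def by auto
  have eB: "i \<in> B \<Longrightarrow> e i = -1" for i using e unfolding A_def B_def by auto
  have split: "(\<Sum>i\<in>I. e i *\<^sub>R x i) = (\<Sum>i\<in>A. x i) - (\<Sum>i\<in>B. x i)" for x :: "nat \<Rightarrow> 'a"
  proof -
    have "(\<Sum>i\<in>I. e i *\<^sub>R x i) = (\<Sum>i\<in>A. e i *\<^sub>R x i) + (\<Sum>i\<in>B. e i *\<^sub>R x i)"
      using sum.union_disjoint[OF AB(5,6,2), of "\<lambda>i. e i *\<^sub>R x i"] AB(1) by simp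
    also have "(\<Sum>i\<in>A. e i *\<^sub>R x i) = (\<Sum>i\<in>A. x i)" by (intro sum.cong) (auto simp: A_def)
    also have "(\<Sum>i\<in>B. e i *\<^sub>R x i) = - (\<Sum>i\<in>B. x i)" using eB by (simp add: sum_negf[symmetric])
    finally show ?thesis by simp
  qed
  have "(\<integral>\<^sup>+ x. ennreal (norm (\<Sum>i\<in>I. e i *\<^sub>R x i)) \<partial>PiM I (\<lambda>_. \<mu>))
      \<le> (\<integral>\<^sup>+ x. ennreal (norm (\<Sum>i\<in>A. x i)) + ennreal (norm (\<Sum>i\<in>B. x i)) \<partial>PiM I (\<lambda>_. \<mu>))"
    unfolding split by (intro nn_integral_mono) (simp add: ennreal_plus[symmetric] del: ennreal_plus add: norm_triangle_ineq4)
  also have "\<dots> = (\<integral>\<^sup>+ x. ennreal (norm (\<Sum>i\<in>A. x i)) \<partial>PiM I (\<lambda>_. \<mu>)) + (\<integral>\<^sup>+ x. ennreal (norm (\<Sum>i\<in>B. x i)) \<partial>PiM I (\<lambda>_. \<mu>))"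
    using AB by (intro nn_integral_add meas_sumnorm mu_sets)
  also have "\<dots> \<le> (\<integral>\<^sup>+ x. ennreal (norm (\<Sum>i\<in>I. x i)) \<partial>PiM I (\<lambda>_. \<mu>)) + (\<integral>\<^sup>+ x. ennreal (norm (\<Sum>i\<in>I. x i)) \<partial>PiM I (\<lambda>_. \<mu>))"
  proof (intro add_mono)
    show "(\<integral>\<^sup>+ x. ennreal (norm (\<Sum>i\<in>A. x i)) \<partial>PiM I (\<lambda>_. \<mu>)) \<le> (\<integral>\<^sup>+ x. ennreal (norm (\<Sum>i\<in>I. x i)) \<partial>PiM I (\<lambda>_. \<mu>))"
      using mono_sets[OF I AB(6), of A] AB by (simp add: Un_commute)
    show "(\<integral>\<^sup>+ x. ennreal (norm (\<Sum>i\<in>B. x i)) \<partial>PiM I (\<lambda>_. \<mu>)) \<le> (\<integral>\<^sup>+ x. ennreal (norm (\<Sum>i\<in>I. x i)) \<partial>PiM I (\<lambda>_. \<mu>))"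
      using mono_sets[OF I AB(5), of B] AB by (simp add: Un_commute Int_commute)
  qed
  finally show ?thesis by (simp add: mult_2)
qed

end

theorem proposition2p10:
  fixes \<mu> :: "'a::{banach,second_countable_topology} measure"
    and M :: "'b measure"
    and X :: "nat \<Rightarrow> 'b \<Rightarrow> 'a"
    and \<epsilon> :: "nat \<Rightarrow> 'b \<Rightarrow> real"
    and n :: nat
  assumes sep_dual: "\<exists>D :: ('a \<Rightarrow>\<^sub>L real) set. countable D \<and> closure D = UNIV"
    and mu_prob: "prob_space \<mu>"
    and mu_sets: "sets \<mu> = sets borel"
    and mu_int: "integrable \<mu> (\<lambda>x. x)"
    and mu_mean: "(\<integral>x. x \<partial>\<mu>) = 0"
    and n_pos: "n \<ge> 1"
    and M_prob: "prob_space M"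
    and X_indep: "prob_space.indep_vars M (\<lambda>_. borel) X {..<n}"
    and X_distr: "\<forall>i<n. distr M borel (X i) = \<mu>"
    and eps_indep: "prob_space.indep_vars M (\<lambda>_. borel) \<epsilon> {..<n}"
    and eps_vals: "\<forall>i<n. AE \<omega> in M. \<epsilon> i \<omega> \<in> {-1, 1}"
    and eps_unif: "\<forall>i<n. measure M {\<omega>\<in>space M. \<epsilon> i \<omega> = 1} = 1/2"
    and X_eps_indep: "distr M (PiM {..<n} (\<lambda>_. borel) \<Otimes>\<^sub>M PiM {..<n} (\<lambda>_. borel))
          (\<lambda>\<omega>. (\<lambda>i\<in>{..<n}. X i \<omega>, \<lambda>i\<in>{..<n}. \<epsilon> i \<omega>))
        = distr M (PiM {..<n} (\<lambda>_. borel)) (\<lambda>\<omega>. \<lambda>i\<in>{..<n}. X i \<omega>)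
          \<Otimes>\<^sub>M distr M (PiM {..<n} (\<lambda>_. borel)) (\<lambda>\<omega>. \<lambda>i\<in>{..<n}. \<epsilon> i \<omega>)"
  shows "(\<integral>\<^sup>+\<omega>. W11 \<mu> (empirical n (\<lambda>i. X i \<omega>)) \<partial>M)
         \<ge> ennreal (1 / (2 * real n)) * (\<integral>\<^sup>+\<omega>. ennreal (norm (\<Sum>i<n. \<epsilon> i \<omega> *\<^sub>R X i \<omega>)) \<partial>M)"
proof -
  interpret M: prob_space M by (rule M_prob)
  interpret S: sym_setup \<mu> by (rule sym_setup.intro[OF mu_prob mu_sets mu_int mu_mean])
  have Xm: "\<And>i. i \<in> {..<n} \<Longrightarrow> X i \<in> borel_measurable M"
    using X_indep unfolding M.indep_vars_def2 by auto
  have em: "\<And>i. i \<in> {..<n} \<Longrightarrow> \<epsilon> i \<in> borel_measurable M"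
    using eps_indep unfolding M.indep_vars_def2 by auto
  define Xv where "Xv = (\<lambda>\<omega>. \<lambda>i\<in>{..<n}. X i \<omega>)"
  define ev where "ev = (\<lambda>\<omega>. \<lambda>i\<in>{..<n}. \<epsilon> i \<omega>)"
  have Xvm: "Xv \<in> measurable M (PiM {..<n} (\<lambda>_. borel))"
    unfolding Xv_def by (rule measurable_restrict) (rule Xm)
  have evm: "ev \<in> measurable M (PiM {..<n} (\<lambda>_. borel))"
    unfolding ev_def by (rule measurable_restrict) (rule em)
  define PX where "PX = distr M (PiM {..<n} (\<lambda>_. borel)) Xv"
  define Pe where "Pe = distr M (PiM {..<n} (\<lambda>_. borel)) ev"
  have PXprob: "prob_space PX" unfolding PX_def by (rule M.prob_space_distr[OF Xvm])
  have Peprob: "prob_space Pe" unfolding Pe_def by (rule M.prob_space_distr[OF evm])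
  have PX_eq: "PX = PiM {..<n} (\<lambda>_. \<mu>)"
  proof -
    have ne: "{..<n} \<noteq> {}" using n_pos by (auto simp: lessThan_empty_iff)
    have "PX = (\<Pi>\<^sub>M i\<in>{..<n}. distr M borel (X i))"
      unfolding PX_def Xv_def using M.indep_vars_iff_distr_eq_PiM'[where M'="\<lambda>_. borel" and X=X, OF ne] X_indep Xm by simp
    also have "\<dots> = PiM {..<n} (\<lambda>_. \<mu>)" using X_distr by (intro PiM_cong) auto
    finally show ?thesis .
  qed
  have sumXm: "(\<lambda>\<omega>. \<Sum>i<n. X i \<omega>) \<in> borel_measurable M"
    by (intro borel_measurable_sum) (use Xm in auto)
  define C where "C = (\<integral>\<^sup>+\<omega>. ennreal (norm (\<Sum>i<n. X i \<omega>)) \<partial>M)"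
  have A: "ennreal (1 / real n) * C \<le> (\<integral>\<^sup>+\<omega>. W11 \<mu> (empirical n (\<lambda>i. X i \<omega>)) \<partial>M)"
  proof -
    have "ennreal (1 / real n) * C = (\<integral>\<^sup>+\<omega>. ennreal (1 / real n) * ennreal (norm (\<Sum>i<n. X i \<omega>)) \<partial>M)"
      unfolding C_def by (rule nn_integral_cmult[symmetric]) (use sumXm in measurable)
    also have "\<dots> \<le> (\<integral>\<^sup>+\<omega>. W11 \<mu> (empirical n (\<lambda>i. X i \<omega>)) \<partial>M)"
    proof (rule nn_integral_mono)
      fix \<omega>
      obtain v :: "'a \<Rightarrow>\<^sub>L real" where v: "norm v \<le> 1" "blinfun_apply v (\<Sum>i<n. X i \<omega>) = norm (\<Sum>i<n. X i \<omega>)"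
        using HB_norming by blast
      have "ennreal (1 / real n) * ennreal (norm (\<Sum>i<n. X i \<omega>)) = ennreal (\<bar>blinfun_apply v (\<Sum>i<n. X i \<omega>)\<bar> / n)"
        using v by (simp add: ennreal_mult[symmetric])
      also have "\<dots> \<le> W1 (distr \<mu> borel (blinfun_apply v)) (distr (empirical n (\<lambda>i. X i \<omega>)) borel (blinfun_apply v))"
        by (rule W1_lower[OF mu_prob mu_sets mu_int mu_mean n_pos])
      also have "\<dots> \<le> W11 \<mu> (empirical n (\<lambda>i. X i \<omega>))"
        unfolding W11_def using v by (intro SUP_upper) auto
      finally show "ennreal (1 / real n) * ennreal (norm (\<Sum>i<n. X i \<omega>)) \<le> W11 \<mu> (empirical n (\<lambda>i. X i \<omega>))" .
    qed
    finally show ?thesis .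
  qed
  define F where "F = (\<lambda>p::(nat \<Rightarrow> 'a) \<times> (nat \<Rightarrow> real). ennreal (norm (\<Sum>i<n. snd p i *\<^sub>R fst p i)))"
  have Fm: "F \<in> borel_measurable (PiM {..<n} (\<lambda>_. borel) \<Otimes>\<^sub>M PiM {..<n} (\<lambda>_. (borel :: real measure)))"
  proof -
    have "(\<lambda>p::(nat \<Rightarrow> 'a) \<times> (nat \<Rightarrow> real). \<Sum>i<n. snd p i *\<^sub>R fst p i) \<in> borel_measurable (PiM {..<n} (\<lambda>_. borel) \<Otimes>\<^sub>M PiM {..<n} (\<lambda>_. (borel :: real measure)))"
    proof (intro borel_measurable_sum borel_measurable_scaleR)
      fix i assume i: "i \<in> {..<n}"
      show "(\<lambda>p::(nat \<Rightarrow> 'a) \<times> (nat \<Rightarrow> real). snd p i) \<in> borel_measurable (PiM {..<n} (\<lambda>_. borel) \<Otimes>\<^sub>M PiM {..<n} (\<lambda>_. (borel :: real measure)))"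
        by (rule measurable_compose[OF measurable_snd measurable_component_singleton[OF i]])
      show "(\<lambda>p::(nat \<Rightarrow> 'a) \<times> (nat \<Rightarrow> real). fst p i) \<in> borel_measurable (PiM {..<n} (\<lambda>_. borel) \<Otimes>\<^sub>M PiM {..<n} (\<lambda>_. (borel :: real measure)))"
        by (rule measurable_compose[OF measurable_fst measurable_component_singleton[OF i]])
    qed
    then show ?thesis unfolding F_def
      by (intro measurable_compose[OF _ measurable_ennreal] measurable_compose[OF _ borel_measurable_norm])
  qed
  define E where "E = (\<integral>\<^sup>+\<omega>. ennreal (norm (\<Sum>i<n. \<epsilon> i \<omega> *\<^sub>R X i \<omega>)) \<partial>M)"
  interpret P2: pair_sigma_finite PX Pe
    by (intro pair_sigma_finite.intro prob_space_imp_sigma_finite PXprob Peprob)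
  have sPX: "sets PX = sets (PiM {..<n} (\<lambda>_. borel))" "sets Pe = sets (PiM {..<n} (\<lambda>_. borel))"
    unfolding PX_def Pe_def by simp_all
  have sPP: "sets (PX \<Otimes>\<^sub>M Pe) = sets (PiM {..<n} (\<lambda>_. borel) \<Otimes>\<^sub>M PiM {..<n} (\<lambda>_. (borel :: real measure)))"
    using sPX by (intro sets_pair_measure_cong) auto
  have FmP: "F \<in> borel_measurable (PX \<Otimes>\<^sub>M Pe)"
    by (subst measurable_cong_sets[OF sPP refl]) (rule Fm)
  have B: "E \<le> 2 * C"
  proof -
    have pm: "(\<lambda>\<omega>. (Xv \<omega>, ev \<omega>)) \<in> measurable M (PiM {..<n} (\<lambda>_. borel) \<Otimes>\<^sub>M PiM {..<n} (\<lambda>_. borel))"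
      using Xvm evm by (rule measurable_Pair)
    have "E = (\<integral>\<^sup>+\<omega>. F (Xv \<omega>, ev \<omega>) \<partial>M)"
      unfolding E_def F_def Xv_def ev_def by (intro nn_integral_cong) simp
    also have "\<dots> = integral\<^sup>N (distr M (PiM {..<n} (\<lambda>_. borel) \<Otimes>\<^sub>M PiM {..<n} (\<lambda>_. borel)) (\<lambda>\<omega>. (Xv \<omega>, ev \<omega>))) F"
      by (rule nn_integral_distr[symmetric, OF pm]) (use Fm in simp)
    also have "distr M (PiM {..<n} (\<lambda>_. borel) \<Otimes>\<^sub>M PiM {..<n} (\<lambda>_. borel)) (\<lambda>\<omega>. (Xv \<omega>, ev \<omega>)) = PX \<Otimes>\<^sub>M Pe"
      unfolding PX_def Pe_def Xv_def ev_def by (rule X_eps_indep)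
    also have "integral\<^sup>N (PX \<Otimes>\<^sub>M Pe) F = (\<integral>\<^sup>+ e. (\<integral>\<^sup>+ x. F (x, e) \<partial>PX) \<partial>Pe)"
      by (rule P2.nn_integral_snd[symmetric, OF FmP])
    also have "\<dots> \<le> (\<integral>\<^sup>+ e. 2 * C \<partial>Pe)"
    proof (rule nn_integral_mono_AE)
      have "AE \<omega> in M. \<forall>i\<in>{..<n}. \<epsilon> i \<omega> \<in> {-1, 1}"
        using eps_vals by (intro eventually_ball_finite) auto
      then have ae0: "AE \<omega> in M. \<forall>i\<in>{..<n}. ev \<omega> i \<in> {-1, 1}"
        by eventually_elim (simp add: ev_def)
      have ms: "{e \<in> space (PiM {..<n} (\<lambda>_. borel)). \<forall>i\<in>{..<n}. e i \<in> {-1, 1::real}} \<in> sets (PiM {..<n} (\<lambda>_. borel))"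
      proof (rule sets.sets_Collect_finite_All)
        fix i :: nat assume i: "i \<in> {..<n}"
        have "(\<lambda>e. e i) -` {-1, 1::real} \<inter> space (PiM {..<n} (\<lambda>_. borel)) \<in> sets (PiM {..<n} (\<lambda>_. borel))"
          by (rule measurable_sets[OF measurable_component_singleton[OF i]]) simp
        moreover have "(\<lambda>e. e i) -` {-1, 1::real} \<inter> space (PiM {..<n} (\<lambda>_. borel)) = {e \<in> space (PiM {..<n} (\<lambda>_. borel)). e i \<in> {-1, 1::real}}"
          by auto
        ultimately show "{e \<in> space (PiM {..<n} (\<lambda>_. borel)). e i \<in> {-1, 1::real}} \<in> sets (PiM {..<n} (\<lambda>_. borel))" by simp
      qed simp
      have ae: "AE e in Pe. \<forall>i\<in>{..<n}. e i \<in> {-1, 1}"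
        unfolding Pe_def using AE_distr_iff[OF evm ms] ae0 by simp
      have C_eq: "C = (\<integral>\<^sup>+ x. ennreal (norm (\<Sum>i\<in>{..<n}. x i)) \<partial>PX)"
      proof -
        have "(\<integral>\<^sup>+ x. ennreal (norm (\<Sum>i\<in>{..<n}. x i)) \<partial>PX) = (\<integral>\<^sup>+ \<omega>. ennreal (norm (\<Sum>i\<in>{..<n}. Xv \<omega> i)) \<partial>M)"
          unfolding PX_def by (rule nn_integral_distr[OF Xvm], subst measurable_cong_sets[OF sets_distr refl], rule meas_sumnorm[OF subset_refl refl])
        also have "\<dots> = C" unfolding C_def Xv_def by (intro nn_integral_cong) simp
        finally show ?thesis by simp
      qed
      show "AE e in Pe. (\<integral>\<^sup>+ x. F (x, e) \<partial>PX) \<le> 2 * C"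
        using ae
      proof eventually_elim
        case (elim e)
        show ?case unfolding F_def C_eq PX_eq using S.signs[of "{..<n}" e] elim by simp
      qed
    qed
    also have "\<dots> = 2 * C" using prob_space.emeasure_space_1[OF Peprob] by simp
    finally show ?thesis .
  qed
  have two: "ennreal (1 / (2 * real n)) * 2 = ennreal (1 / real n)"
  proof -
    have "ennreal (1 / (2 * real n)) * 2 = ennreal (1 / (2 * real n)) * ennreal 2" by simp
    also have "\<dots> = ennreal (1 / (2 * real n) * 2)" by (rule ennreal_mult[symmetric]) auto
    also have "\<dots> = ennreal (1 / real n)" by simp
    finally show ?thesis .
  qed
  have "ennreal (1 / (2 * real n)) * E \<le> ennreal (1 / (2 * real n)) * (2 * C)"
    using B by (rule mult_left_mono) simp
  also have "\<dots> = ennreal (1 / real n) * C" using two by (simp add: mult.assoc[symmetric])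
  also have "\<dots> \<le> (\<integral>\<^sup>+\<omega>. W11 \<mu> (empirical n (\<lambda>i. X i \<omega>)) \<partial>M)" by (rule A)
  finally show ?thesis unfolding E_def .
qed

end
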